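(* Let $(G,v)$ be a Hamel space over an ordered field $C$ and $G_0\subseteq G$ a $C$-linear subspace. For any $c_1,\dots,c_m\in G\setminus G_0$, \[\#\Big(v\big(G_0+\textstyle\sum_{i=1}^mCc_i\big)\setminus v(G_0)\Big)\le m.\] In particular, there are $n\le m$ and distinct $d_1,\dots,d_n\in v(G_0+\sum_{i=1}^mCc_i)\setminus v(G_0)$ such that $v(G_0+\sum_{i=1}^mCc_i)\subseteq v(G_0)\cup\{d_1,\dots,d_n\}$.
   Context: Let $C$ be an ordered field. A $2$-ordered $C$-vector space is a $C$-vector space $G$ with two total orderings $<_0,<_1$ such that $G$ is an ordered $C$-vector space with respect to each. Put $G_\infty=G\cup\{\infty\}$, with $G<_0\infty$, $G<_1\infty$. A Hamel valuation on $G$ is a map $v:G\to G_\infty$ such that for all $x,y\in G$ and $\lambda\in C^{\times}$: $v(x)=\infty$ iff $x=0$; $v(x+y)\ge_0\min_0(v(x),v(y))$; $v(\lambda x)=v(x)$; if $0<_1x<_1y$ then $v(x)\ge_0v(y)$; $v(v(x))=v(x)$ (with $v(\infty)=\infty$); and $v(x)>_10$. A Hamel space is such a pair $(G,v)$. *)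

theory Defs
  imports Main "HOL.Vector_Spaces"
begin

text \<open>G_infinity is 'g option, with None playing the role of infinity.\<close>

definition strict_total_order :: "('g \<Rightarrow> 'g \<Rightarrow> bool) \<Rightarrow> bool" where
  "strict_total_order lt \<longleftrightarrow>
     (\<forall>x. \<not> lt x x) \<and> (\<forall>x y z. lt x y \<longrightarrow> lt y z \<longrightarrow> lt x z) \<and>
     (\<forall>x y. lt x y \<or> x = y \<or> lt y x)"

definition ordered_vs ::
  "('c::linordered_field \<Rightarrow> 'g::ab_group_add \<Rightarrow> 'g) \<Rightarrow> ('g \<Rightarrow> 'g \<Rightarrow> bool) \<Rightarrow> bool" where
  "ordered_vs scale lt \<longleftrightarrow> vector_space scale \<and> strict_total_order lt \<and>
     (\<forall>x y z. lt x y \<longrightarrow> lt (x + z) (y + z)) \<and>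
     (\<forall>a x. 0 < a \<longrightarrow> lt 0 x \<longrightarrow> lt 0 (scale a x))"

definition two_ordered_vs ::
  "('c::linordered_field \<Rightarrow> 'g::ab_group_add \<Rightarrow> 'g) \<Rightarrow> ('g \<Rightarrow> 'g \<Rightarrow> bool) \<Rightarrow> ('g \<Rightarrow> 'g \<Rightarrow> bool) \<Rightarrow> bool" where
  "two_ordered_vs scale lt0 lt1 \<longleftrightarrow> ordered_vs scale lt0 \<and> ordered_vs scale lt1"

fun ext_lt :: "('g \<Rightarrow> 'g \<Rightarrow> bool) \<Rightarrow> 'g option \<Rightarrow> 'g option \<Rightarrow> bool" where
  "ext_lt lt (Some x) (Some y) = lt x y"
| "ext_lt lt (Some x) None = True"
| "ext_lt lt None _ = False"

definition ext_le :: "('g \<Rightarrow> 'g \<Rightarrow> bool) \<Rightarrow> 'g option \<Rightarrow> 'g option \<Rightarrow> bool" where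
  "ext_le lt a b \<longleftrightarrow> ext_lt lt a b \<or> a = b"

definition ext_min :: "('g \<Rightarrow> 'g \<Rightarrow> bool) \<Rightarrow> 'g option \<Rightarrow> 'g option \<Rightarrow> 'g option" where
  "ext_min lt a b = (if ext_le lt a b then a else b)"

definition ext_v :: "('g \<Rightarrow> 'g option) \<Rightarrow> 'g option \<Rightarrow> 'g option" where
  "ext_v v a = (case a of None \<Rightarrow> None | Some x \<Rightarrow> v x)"

definition hamel_valuation ::
  "('c::linordered_field \<Rightarrow> 'g::ab_group_add \<Rightarrow> 'g) \<Rightarrow> ('g \<Rightarrow> 'g \<Rightarrow> bool) \<Rightarrow> ('g \<Rightarrow> 'g \<Rightarrow> bool)
     \<Rightarrow> ('g \<Rightarrow> 'g option) \<Rightarrow> bool" where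
  "hamel_valuation scale lt0 lt1 v \<longleftrightarrow>
     (\<forall>x. v x = None \<longleftrightarrow> x = 0) \<and>
     (\<forall>x y. ext_le lt0 (ext_min lt0 (v x) (v y)) (v (x + y))) \<and>
     (\<forall>a x. a \<noteq> 0 \<longrightarrow> v (scale a x) = v x) \<and>
     (\<forall>x y. lt1 0 x \<longrightarrow> lt1 x y \<longrightarrow> ext_le lt0 (v y) (v x)) \<and>
     (\<forall>x. ext_v v (v x) = v x) \<and>
     (\<forall>x. ext_lt lt1 (Some 0) (v x))"

definition hamel_space ::
  "('c::linordered_field \<Rightarrow> 'g::ab_group_add \<Rightarrow> 'g) \<Rightarrow> ('g \<Rightarrow> 'g \<Rightarrow> bool) \<Rightarrow> ('g \<Rightarrow> 'g \<Rightarrow> bool)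
     \<Rightarrow> ('g \<Rightarrow> 'g option) \<Rightarrow> bool" where
  "hamel_space scale lt0 lt1 v \<longleftrightarrow>
     two_ordered_vs scale lt0 lt1 \<and> hamel_valuation scale lt0 lt1 v"

end

theory Submission
  imports Defs
begin

lemma ext_le_facts:
  assumes "strict_total_order lt"
  shows ext_le_total: "ext_le lt a b \<or> ext_le lt b a"
    and ext_le_antisym: "ext_le lt a b \<Longrightarrow> ext_le lt b a \<Longrightarrow> a = b"
    and ext_min_cases: "ext_min lt a b = a \<or> ext_min lt a b = b"
    and ext_min_le1: "ext_le lt (ext_min lt a b) a"
    and ext_min_le2: "ext_le lt (ext_min lt a b) b"
proof -
  have irr: "\<And>x. \<not> lt x x" and tr: "\<And>x y z. lt x y \<Longrightarrow> lt y z \<Longrightarrow> lt x z"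
    and tot: "\<And>x y. lt x y \<or> x = y \<or> lt y x"
    using assms unfolding strict_total_order_def by blast+
  show t: "ext_le lt a b \<or> ext_le lt b a"
    unfolding ext_le_def using tot
    by (cases a; cases b) auto
  show "ext_le lt a b \<Longrightarrow> ext_le lt b a \<Longrightarrow> a = b"
    unfolding ext_le_def using irr tr
    by (cases a; cases b) auto
  show "ext_min lt a b = a \<or> ext_min lt a b = b" unfolding ext_min_def by auto
  show "ext_le lt (ext_min lt a b) a" using t unfolding ext_min_def ext_le_def by auto
  show "ext_le lt (ext_min lt a b) b" using t unfolding ext_min_def ext_le_def by auto
qed

lemma min_eq:
  assumes hs: "hamel_space scale lt0 lt1 v" and ne: "v x \<noteq> v y"
  shows "v (x + y) = v x \<or> v (x + y) = v y"
proof -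
  have vs: "vector_space scale" and so: "strict_total_order lt0"
    using hs unfolding hamel_space_def two_ordered_vs_def ordered_vs_def by auto
  interpret vector_space scale by (rule vs)
  have hv: "hamel_valuation scale lt0 lt1 v" using hs unfolding hamel_space_def by auto
  have ul: "\<And>x y. ext_le lt0 (ext_min lt0 (v x) (v y)) (v (x + y))"
    and sc: "\<And>a x. a \<noteq> 0 \<Longrightarrow> v (scale a x) = v x"
    using hv unfolding hamel_valuation_def by auto
  have neg: "\<And>z. v (- z) = v z"
  proof -
    fix z
    have "- z = scale (-1) z" by simp
    then show "v (- z) = v z" using sc[of "-1" z] by simp
  qed
  have key: "v (a + b) = v a" if "ext_le lt0 (v a) (v b)" "v a \<noteq> v b" for a b
  proof -
    have m: "ext_min lt0 (v a) (v b) = v a" using that unfolding ext_min_def by simp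
    have 1: "ext_le lt0 (v a) (v (a + b))" using ul[of a b] m by simp
    have 2: "ext_le lt0 (ext_min lt0 (v (a + b)) (v (- b))) (v a)"
      using ul[of "a + b" "- b"] by simp
    show ?thesis
    proof (cases "ext_min lt0 (v (a + b)) (v (- b)) = v (a + b)")
      case True
      then show ?thesis using 1 2 ext_le_antisym[OF so] by metis
    next
      case False
      then have "ext_min lt0 (v (a + b)) (v (- b)) = v b"
        using ext_min_cases[OF so] neg by metis
      then show ?thesis using 2 that ext_le_antisym[OF so] by metis
    qed
  qed
  show ?thesis
  proof (cases "ext_le lt0 (v x) (v y)")
    case True then show ?thesis using key ne by blast
  next
    case False
    then have "ext_le lt0 (v y) (v x)" using ext_le_total[OF so] by blast
    then show ?thesis using key[of y x] ne by (simp add: add.commute)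
  qed
qed

lemma one_step:
  assumes hs: "hamel_space scale lt0 lt1 v"
    and cl: "\<forall>g\<in>H. \<forall>h\<in>H. \<forall>a b. scale b g - scale a h \<in> H"
  shows "\<exists>e. v ` {h + scale a c | h a. h \<in> H} \<subseteq> v ` H \<union> {e}"
proof -
  have vs: "vector_space scale"
    using hs unfolding hamel_space_def two_ordered_vs_def ordered_vs_def by auto
  interpret vector_space scale by (rule vs)
  have hv: "hamel_valuation scale lt0 lt1 v" using hs unfolding hamel_space_def by auto
  have sc: "\<And>a x. a \<noteq> 0 \<Longrightarrow> v (scale a x) = v x"
    using hv unfolding hamel_valuation_def by auto
  show ?thesis
  proof (cases "\<exists>g a. g \<in> H \<and> v (g + scale a c) \<notin> v ` H")
    case False
    then show ?thesis by blast
  next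
    case True
    then obtain g a where g: "g \<in> H" and ga: "v (g + scale a c) \<notin> v ` H" by blast
    have a0: "a \<noteq> 0" using ga g by auto
    show ?thesis
    proof (rule exI[of _ "v (g + scale a c)"], rule subsetI)
      fix w assume "w \<in> v ` {h + scale a c | h a. h \<in> H}"
      then obtain h b where h: "h \<in> H" and w: "w = v (h + scale b c)" by blast
      show "w \<in> v ` H \<union> {v (g + scale a c)}"
      proof (rule ccontr)
        assume nw: "w \<notin> v ` H \<union> {v (g + scale a c)}"
        then have b0: "b \<noteq> 0" using h w by auto
        let ?x = "scale b (g + scale a c)" and ?y = "scale (- a) (h + scale b c)"
        have vx: "v ?x = v (g + scale a c)" using sc b0 by blast
        have vy: "v ?y = w" using sc[of "- a" "h + scale b c"] a0 w by (simp del: scale_minus_left)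
        have "?x + ?y = scale b g - scale a h"
          by (simp add: scale_right_distrib mult.commute)
        then have inH: "?x + ?y \<in> H" using cl g h by simp
        have "v (?x + ?y) = v ?x \<or> v (?x + ?y) = v ?y"
        proof -
          have "v ?x \<noteq> v ?y" using vx vy nw by auto
          then show ?thesis by (rule min_eq[OF hs])
        qed
        then show False using inH vx vy nw ga by (metis UnCI image_eqI)
      qed
    qed
  qed
qed

theorem proposition4p4:
  fixes scale :: "'c::linordered_field \<Rightarrow> 'g::ab_group_add \<Rightarrow> 'g"
    and lt0 lt1 :: "'g \<Rightarrow> 'g \<Rightarrow> bool"
    and v :: "'g \<Rightarrow> 'g option"
    and G0 :: "'g set" and c :: "nat \<Rightarrow> 'g" and m :: nat
  assumes "hamel_space scale lt0 lt1 v"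
    and "module.subspace scale G0"
    and "\<forall>i\<in>{1..m}. c i \<notin> G0"
  defines "S \<equiv> {g + (\<Sum>i\<in>{1..m}. scale (l i) (c i)) | g l. g \<in> G0}"
  shows "finite (v ` S - v ` G0) \<and> card (v ` S - v ` G0) \<le> m
    \<and> (\<exists>n d. n \<le> m \<and> inj_on d {1..n} \<and> d ` {1..n} \<subseteq> v ` S - v ` G0
            \<and> v ` S \<subseteq> v ` G0 \<union> d ` {1..n})"
proof -
  note hs = assms(1)
  have vs: "vector_space scale"
    using hs unfolding hamel_space_def two_ordered_vs_def ordered_vs_def by auto
  interpret vector_space scale by (rule vs)
  note sub = assms(2)
  define T where "T k = {g + (\<Sum>i\<in>{1..k}. scale (l i) (c i)) | g l. g \<in> G0}" for k
  have clT: "\<forall>x\<in>T k. \<forall>y\<in>T k. \<forall>a b. scale b x - scale a y \<in> T k" for k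
  proof (intro ballI allI)
    fix x y a b assume "x \<in> T k" "y \<in> T k"
    then obtain g l h l' where g: "g \<in> G0" and h: "h \<in> G0"
      and x: "x = g + (\<Sum>i\<in>{1..k}. scale (l i) (c i))"
      and y: "y = h + (\<Sum>i\<in>{1..k}. scale (l' i) (c i))"
      unfolding T_def by blast
    have "scale b x - scale a y = (scale b g - scale a h)
        + (\<Sum>i\<in>{1..k}. scale (b * l i - a * l' i) (c i))"
      by (simp add: x y scale_right_distrib scale_right_diff_distrib scale_sum_right
          scale_left_diff_distrib sum_subtractf algebra_simps)
    moreover have "scale b g - scale a h \<in> G0"
      using g h sub by (simp add: subspace_diff subspace_scale)
    ultimately show "scale b x - scale a y \<in> T k" unfolding T_def
      by (intro CollectI exI[of _ "scale b g - scale a h"] exI[of _ "\<lambda>i. b * l i - a * l' i"]) simp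
  qed
  have step: "v ` T (Suc k) \<subseteq> v ` {h + scale a (c (Suc k)) | h a. h \<in> T k}" for k
  proof
    fix w assume "w \<in> v ` T (Suc k)"
    then obtain g l where g: "g \<in> G0"
      and w: "w = v (g + (\<Sum>i\<in>{1..Suc k}. scale (l i) (c i)))"
      unfolding T_def by blast
    have "g + (\<Sum>i\<in>{1..Suc k}. scale (l i) (c i))
        = (g + (\<Sum>i\<in>{1..k}. scale (l i) (c i))) + scale (l (Suc k)) (c (Suc k))"
      by (simp add: add.assoc)
    moreover have "g + (\<Sum>i\<in>{1..k}. scale (l i) (c i)) \<in> T k" unfolding T_def using g by blast
    ultimately show "w \<in> v ` {h + scale a (c (Suc k)) | h a. h \<in> T k}" using w by blast
  qed
  have main: "\<exists>E. finite E \<and> card E \<le> k \<and> v ` T k \<subseteq> v ` G0 \<union> E" for k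
  proof (induction k)
    case 0
    have "T 0 = G0" unfolding T_def by auto
    then show ?case by (intro exI[of _ "{}"]) auto
  next
    case (Suc k)
    then obtain E where E: "finite E" "card E \<le> k" "v ` T k \<subseteq> v ` G0 \<union> E" by blast
    obtain e where e: "v ` {h + scale a (c (Suc k)) | h a. h \<in> T k} \<subseteq> v ` T k \<union> {e}"
      using one_step[OF hs clT] by blast
    have "card (insert e E) \<le> Suc k" using E by (simp add: card_insert_if)
    moreover have "v ` T (Suc k) \<subseteq> v ` G0 \<union> insert e E" using step[of k] e E(3) by blast
    ultimately show ?case using E(1) by blast
  qed
  obtain E where E: "finite E" "card E \<le> m" "v ` S \<subseteq> v ` G0 \<union> E"
    using main[of m] unfolding T_def S_def by blast
  let ?F = "v ` S - v ` G0"
  have sF: "?F \<subseteq> E" using E by blast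
  have fin: "finite ?F" using sF E by (meson finite_subset)
  have cF: "card ?F \<le> m" using card_mono[OF E(1) sF] E(2) by simp
  obtain d where d: "bij_betw d {1..card ?F} ?F" using ex_bij_betw_nat_finite_1[OF fin] by blast
  have "inj_on d {1..card ?F}" "d ` {1..card ?F} = ?F" using d by (auto simp: bij_betw_def)
  then show ?thesis using fin cF by (intro conjI exI[of _ "card ?F"] exI[of _ d]) auto
qed

end
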